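(* Fix an integer $d\geq 3$ and $\rho<1$. There exists $\delta=\delta(d,\rho)>0$ such that the following holds for all sufficiently large $n$. Let $G_n$ be a $d$-regular graph on $n$ vertices whose transition matrix has all eigenvalues other than the top eigenvalue $1$ of absolute value at most $\rho$, let $v$ be any vertex of $G_n$, and let $G$ be obtained by adding a new vertex $v'$ and the edge $\{v,v'\}$. Then for simple random walk on $G$ and every vertex $u\neq v'$ of $G$, $$\mathbb{P}_u(\tau_{v'}\geq \delta n)\geq \delta\qquad\text{and}\qquad \mathbb{P}_u(\tau_{v'}\leq n)\geq\delta.$$
   Context: $\tau_{v'}=\min\{t\geq 1:X_t=v'\}$ for simple random walk $(X_t)$ on $G$; $\mathbb{P}_u$ is the law with $X_0=u$. *)

theory Defs
  imports "Jordan_Normal_Form.Char_Poly"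
begin

definition srw_step :: "'a set \<Rightarrow> ('a \<Rightarrow> 'a \<Rightarrow> bool) \<Rightarrow> 'a \<Rightarrow> 'a \<Rightarrow> real" where
  "srw_step V Adj x y = (if Adj x y then 1 / real (card {z \<in> V. Adj x z}) else 0)"

(* srw_avoid V Adj t k x = P_x(X_1 \<noteq> t, ..., X_k \<noteq> t) = P_x(tau_t > k),
   where tau_t = min{s \<ge> 1 : X_s = t}. *)
fun srw_avoid :: "'a set \<Rightarrow> ('a \<Rightarrow> 'a \<Rightarrow> bool) \<Rightarrow> 'a \<Rightarrow> nat \<Rightarrow> 'a \<Rightarrow> real" where
  "srw_avoid V Adj t 0 x = 1"
| "srw_avoid V Adj t (Suc k) x =
     (\<Sum>y\<in>V. srw_step V Adj x y * (if y = t then 0 else srw_avoid V Adj t k y))"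

(* P_x(tau_t \<ge> r) for a real threshold r: tau_t \<ge> r iff tau_t > ceiling r - 1 *)
definition hit_time_ge_prob :: "'a set \<Rightarrow> ('a \<Rightarrow> 'a \<Rightarrow> bool) \<Rightarrow> 'a \<Rightarrow> real \<Rightarrow> 'a \<Rightarrow> real" where
  "hit_time_ge_prob V Adj t r x = srw_avoid V Adj t (nat \<lceil>r\<rceil> - 1) x"

definition hit_time_le_prob :: "'a set \<Rightarrow> ('a \<Rightarrow> 'a \<Rightarrow> bool) \<Rightarrow> 'a \<Rightarrow> nat \<Rightarrow> 'a \<Rightarrow> real" where
  "hit_time_le_prob V Adj t k x = 1 - srw_avoid V Adj t k x"

definition regular_graph :: "nat \<Rightarrow> nat \<Rightarrow> (nat \<Rightarrow> nat \<Rightarrow> bool) \<Rightarrow> bool" where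
  "regular_graph n d E \<longleftrightarrow>
     (\<forall>x y. E x y \<longrightarrow> x < n \<and> y < n) \<and>
     (\<forall>x y. E x y \<longrightarrow> E y x) \<and>
     (\<forall>x. \<not> E x x) \<and>
     (\<forall>x<n. card {y. E x y} = d)"

definition transition_matrix :: "nat \<Rightarrow> nat \<Rightarrow> (nat \<Rightarrow> nat \<Rightarrow> bool) \<Rightarrow> real mat" where
  "transition_matrix n d E = mat n n (\<lambda>(i, j). if E i j then 1 / real d else 0)"

(* all eigenvalues (with multiplicity) other than the top eigenvalue 1 have modulus \<le> rho:
   the characteristic polynomial is (X - 1) * q with every root of q of modulus \<le> rho *)
definition spectral_bound :: "real mat \<Rightarrow> real \<Rightarrow> bool" where
  "spectral_bound P rho \<longleftrightarrow>
     (\<exists>q. char_poly (map_mat complex_of_real P) = [:-1, 1:] * q \<and>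
          (\<forall>z. poly q z = 0 \<longrightarrow> cmod z \<le> rho))"

(* G: add new vertex n (= v') and edge {v, n} *)
definition add_pendant :: "(nat \<Rightarrow> nat \<Rightarrow> bool) \<Rightarrow> nat \<Rightarrow> nat \<Rightarrow> nat \<Rightarrow> nat \<Rightarrow> bool" where
  "add_pendant E v w x y \<longleftrightarrow> E x y \<or> (x = v \<and> y = w) \<or> (x = w \<and> y = v)"

end

theory Submission
  imports Defs "Jordan_Normal_Form.Spectral_Radius"
begin


definition Tm :: "nat \<Rightarrow> complex mat" where
 "Tm n = mat n n (\<lambda>(i,j). if j = 0 then 1 else (if i = j then 1 else 0) - (if i = 0 then 1 else 0))"
definition Um :: "nat \<Rightarrow> complex mat" where
 "Um n = mat n n (\<lambda>(i,j). if i = 0 then 1 / of_nat n else (if i = j then 1 else 0) - 1 / of_nat n)"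

lemma Tm_carrier[simp]: "Tm n \<in> carrier_mat n n" by (simp add: Tm_def)
lemma Um_carrier[simp]: "Um n \<in> carrier_mat n n" by (simp add: Um_def)

lemma mult_entry: "A \<in> carrier_mat n n \<Longrightarrow> B \<in> carrier_mat n n \<Longrightarrow> i < n \<Longrightarrow> j < n \<Longrightarrow>
  (A * B) $$ (i,j) = (\<Sum>k<n. A $$ (i,k) * B $$ (k,j))"
  by (simp add: scalar_prod_def atLeast0LessThan)

lemma sdelta1: "(j::nat) < n \<Longrightarrow> (\<Sum>k<n. if k = j then (c::'a::comm_monoid_add) else 0) = c"
  using sum.delta[of "{..<n}" j "\<lambda>_. c"] by simp
lemma sdelta2: "(j::nat) < n \<Longrightarrow> (\<Sum>k<n. if j = k then (c::'a::comm_monoid_add) else 0) = c"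
  using sum.delta'[of "{..<n}" j "\<lambda>_. c"] by simp

lemma UT: assumes n: "n > 0" shows "Um n * Tm n = 1\<^sub>m n"
proof (rule eq_matI)
  fix i j assume i: "i < dim_row (1\<^sub>m n)" and j: "j < dim_col (1\<^sub>m n)"
  hence i: "i < n" and j: "j < n" by auto
  have nz: "(of_nat n :: complex) \<noteq> 0" using n by auto
  have "(Um n * Tm n) $$ (i,j) = (\<Sum>k<n. Um n $$ (i,k) * Tm n $$ (k,j))"
    using i j by (simp add: mult_entry)
  also have "\<dots> = (if i = j then 1 else 0)"
  proof (cases "i = 0")
    case True
    show ?thesis
    proof (cases "j = 0")
      case True
      have "(\<Sum>k<n. Um n $$ (i,k) * Tm n $$ (k,j)) = (\<Sum>k<n. 1 / of_nat n)"
        by (rule sum.cong, insert i j \<open>i = 0\<close> True, auto simp: Um_def Tm_def)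
      thus ?thesis using nz \<open>i = 0\<close> True by simp
    next
      case False
      have "(\<Sum>k<n. Um n $$ (i,k) * Tm n $$ (k,j)) = (\<Sum>k<n. (if k = j then 1 / of_nat n else 0) - (if k = 0 then 1 / of_nat n else 0))"
        by (rule sum.cong, insert i j \<open>i = 0\<close> False, auto simp: Um_def Tm_def)
      thus ?thesis using nz \<open>i = 0\<close> False i j n by (simp add: sum_subtractf sdelta1)
    qed
  next
    case False
    show ?thesis
    proof (cases "j = 0")
      case True
      have "(\<Sum>k<n. Um n $$ (i,k) * Tm n $$ (k,j)) = (\<Sum>k<n. (if i = k then 1 else 0) - 1 / of_nat n)"
        by (rule sum.cong, insert i j \<open>i \<noteq> 0\<close> True, auto simp: Um_def Tm_def)
      thus ?thesis using nz \<open>i \<noteq> 0\<close> True i j n by (simp add: sum_subtractf sdelta2)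
    next
      case False
      have "(\<Sum>k<n. Um n $$ (i,k) * Tm n $$ (k,j)) = (\<Sum>k<n. 
        ((if i = k then 1 else 0) - 1 / of_nat n) * ((if k = j then 1 else 0) - (if k = 0 then 1 else 0)))"
        by (rule sum.cong, insert i j \<open>i \<noteq> 0\<close> False, auto simp: Um_def Tm_def)
      also have "\<dots> = (\<Sum>k<n. (if k = j then (if i = j then 1 else 0) - 1 / of_nat n else 0) 
          - (if k = 0 then - 1 / of_nat n else 0))"
        by (rule sum.cong, insert \<open>i \<noteq> 0\<close> False, auto)
      finally show ?thesis using nz \<open>i \<noteq> 0\<close> False i j n by (simp add: sum_subtractf sdelta1)
    qed
  qed
  finally show "(Um n * Tm n) $$ (i,j) = 1\<^sub>m n $$ (i,j)" using i j by simp
qed (auto simp: Um_def Tm_def)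

lemma TU: assumes n: "n > 0" shows "Tm n * Um n = 1\<^sub>m n"
proof (rule eq_matI)
  fix i j assume i: "i < dim_row (1\<^sub>m n)" and j: "j < dim_col (1\<^sub>m n)"
  hence i: "i < n" and j: "j < n" by auto
  have nz: "(of_nat n :: complex) \<noteq> 0" using n by auto
  have "(Tm n * Um n) $$ (i,j) = (\<Sum>k<n. Tm n $$ (i,k) * Um n $$ (k,j))"
    using i j by (simp add: mult_entry)
  also have "\<dots> = (\<Sum>k<n. (if k = 0 then 1 / of_nat n else 0) + 
     (if k = 0 then 0 else ((if i = k then 1 else 0) - (if i = 0 then 1 else 0)) * ((if k = j then 1 else 0) - 1 / of_nat n)))"
    by (rule sum.cong, insert i j, auto simp: Um_def Tm_def)
  also have "\<dots> = (\<Sum>k<n. (if k = 0 then 1 / of_nat n else 0) + 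
     ((if i = k then 1 else 0) - (if i = 0 then 1 else 0)) * ((if k = j then 1 else 0) - 1 / of_nat n))"
    by (rule sum.cong, auto)
  also have "\<dots> = (if i = j then 1 else 0)"
  proof (cases "i = 0")
    case True
    have "(\<Sum>k<n. (if k = 0 then 1 / (of_nat n::complex) else 0) + 
     ((if i = k then 1 else 0) - (if i = 0 then 1 else 0)) * ((if k = j then 1 else 0) - 1 / of_nat n))
     = (\<Sum>k<n. (if k = 0 then 1 / of_nat n else 0) + ((if k = 0 then 1 else 0) - 1) * ((if k = j then 1 else 0) - 1 / of_nat n))"
      using True by (intro sum.cong, auto)
    also have "\<dots> = (\<Sum>k<n. 1 / of_nat n - (if k = j then (if j = 0 then 0 else 1) else 0))"
      by (intro sum.cong, auto simp: algebra_simps)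
    finally show ?thesis using True nz i j n by (simp add: sum_subtractf sum.distrib sdelta1)
  next
    case False
    have "(\<Sum>k<n. (if k = 0 then 1 / (of_nat n::complex) else 0) + 
     ((if i = k then 1 else 0) - (if i = 0 then 1 else 0)) * ((if k = j then 1 else 0) - 1 / of_nat n))
     = (\<Sum>k<n. (if k = 0 then 1 / of_nat n else 0) + (if k = i then (if i = j then 1 else 0) - 1 / of_nat n else 0))"
      using False by (intro sum.cong, auto)
    thus ?thesis using False nz i j n by (simp add: sum_subtractf sum.distrib sdelta1)
  qed
  finally show "(Tm n * Um n) $$ (i,j) = 1\<^sub>m n $$ (i,j)" using i j by simp
qed (auto simp: Um_def Tm_def)


lemma triple_entry: assumes A: "A \<in> carrier_mat n n" and i: "i < n" and j: "j < n"
  shows "(Um n * A * Tm n) $$ (i,j) = (\<Sum>k<n. \<Sum>l<n. Um n $$ (i,l) * A $$ (l,k) * Tm n $$ (k,j))"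
proof -
  have "(Um n * A * Tm n) $$ (i,j) = (\<Sum>k<n. (Um n * A) $$ (i,k) * Tm n $$ (k,j))"
    using A i j by (intro mult_entry, simp_all add: mult_carrier_mat[OF Um_carrier A])
  also have "\<dots> = (\<Sum>k<n. \<Sum>l<n. Um n $$ (i,l) * A $$ (l,k) * Tm n $$ (k,j))"
  proof (rule sum.cong[OF refl])
    fix k assume "k \<in> {..<n}"
    thus "(Um n * A) $$ (i,k) * Tm n $$ (k,j) = (\<Sum>l<n. Um n $$ (i,l) * A $$ (l,k) * Tm n $$ (k,j))"
      by (subst mult_entry[OF Um_carrier A i], auto simp: sum_distrib_right)
  qed
  finally show ?thesis .
qed

lemma U_rowsum: assumes "i < n" shows "(\<Sum>l<n. Um n $$ (i,l)) = (if i = 0 then 1 else 0)"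
proof (cases "i = 0")
  case True
  have "(\<Sum>l<n. Um n $$ (i,l)) = (\<Sum>l<n. 1 / of_nat n)"
    by (rule sum.cong, insert True assms, auto simp: Um_def)
  thus ?thesis using True assms by simp
next
  case False
  have "(\<Sum>l<n. Um n $$ (i,l)) = (\<Sum>l<n. (if l = i then 1 else 0) - 1 / of_nat n)"
    by (rule sum.cong, insert False assms, auto simp: Um_def)
  thus ?thesis using False assms by (simp add: sum_subtractf sdelta1)
qed

lemma UAT_col0: assumes A: "A \<in> carrier_mat n n" and i: "i < n"
  and rs: "\<And>l. l < n \<Longrightarrow> (\<Sum>k<n. A $$ (l,k)) = s"
  shows "(Um n * A * Tm n) $$ (i,0) = (if i = 0 then s else 0)"
proof -
  have n: "0 < n" using i by auto
  have "(Um n * A * Tm n) $$ (i,0) = (\<Sum>k<n. \<Sum>l<n. Um n $$ (i,l) * A $$ (l,k) * Tm n $$ (k,0))"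
    by (rule triple_entry[OF A i n])
  also have "\<dots> = (\<Sum>l<n. \<Sum>k<n. Um n $$ (i,l) * A $$ (l,k))"
    by (subst sum.swap, rule sum.cong, auto simp: Tm_def)
  also have "\<dots> = (\<Sum>l<n. Um n $$ (i,l) * s)"
    by (rule sum.cong, auto simp: sum_distrib_left[symmetric] rs)
  also have "\<dots> = (if i = 0 then s else 0)"
    by (simp add: sum_distrib_right[symmetric] U_rowsum[OF i])
  finally show ?thesis .
qed

lemma UAT_diff: assumes A: "A \<in> carrier_mat n n" and B: "B \<in> carrier_mat n n"
  and i: "i < n" and j: "j < n" and i0: "i \<noteq> 0"
  and diff: "\<And>l k. l < n \<Longrightarrow> k < n \<Longrightarrow> B $$ (l,k) = A $$ (l,k) - c"
  shows "(Um n * B * Tm n) $$ (i,j) = (Um n * A * Tm n) $$ (i,j)"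
proof -
  have "(Um n * B * Tm n) $$ (i,j) = (\<Sum>k<n. \<Sum>l<n. Um n $$ (i,l) * B $$ (l,k) * Tm n $$ (k,j))"
    by (rule triple_entry[OF B i j])
  also have "\<dots> = (\<Sum>k<n. (\<Sum>l<n. Um n $$ (i,l) * A $$ (l,k) * Tm n $$ (k,j))
     - (\<Sum>l<n. Um n $$ (i,l)) * c * Tm n $$ (k,j))"
  proof (rule sum.cong[OF refl])
    fix k assume k: "k \<in> {..<n}"
    have "(\<Sum>l<n. Um n $$ (i,l) * B $$ (l,k) * Tm n $$ (k,j)) = 
      (\<Sum>l<n. Um n $$ (i,l) * A $$ (l,k) * Tm n $$ (k,j) - Um n $$ (i,l) * c * Tm n $$ (k,j))"
      by (rule sum.cong, insert k, auto simp: diff algebra_simps)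
    thus "(\<Sum>l<n. Um n $$ (i,l) * B $$ (l,k) * Tm n $$ (k,j)) = (\<Sum>l<n. Um n $$ (i,l) * A $$ (l,k) * Tm n $$ (k,j))
     - (\<Sum>l<n. Um n $$ (i,l)) * c * Tm n $$ (k,j)"
      by (simp add: sum_subtractf sum_distrib_right)
  qed
  also have "\<dots> = (\<Sum>k<n. \<Sum>l<n. Um n $$ (i,l) * A $$ (l,k) * Tm n $$ (k,j))
     - (\<Sum>k<n. (\<Sum>l<n. Um n $$ (i,l)) * c * Tm n $$ (k,j))"
    by (simp add: sum_subtractf)
  also have "(\<Sum>k<n. (\<Sum>l<n. Um n $$ (i,l)) * c * Tm n $$ (k,j)) = 0"
    using U_rowsum[OF i] i0 by simp
  also have "(\<Sum>k<n. \<Sum>l<n. Um n $$ (i,l) * A $$ (l,k) * Tm n $$ (k,j)) = (Um n * A * Tm n) $$ (i,j)"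
    by (rule triple_entry[OF A i j, symmetric])
  finally show ?thesis by simp
qed


lemma char_poly_col0:
  fixes M :: "'a::field mat"
  assumes M: "M \<in> carrier_mat n n" and n: "n > 0"
    and col: "\<And>i. i < n \<Longrightarrow> M $$ (i,0) = (if i = 0 then s else 0)"
  shows "char_poly M = [:-s,1:] * char_poly (mat (n-1) (n-1) (\<lambda>(i,j). M $$ (Suc i, Suc j)))"
proof -
  obtain A1 A2 A0 A3 where sb: "split_block M 1 1 = (A1,A2,A0,A3)"
    by (cases "split_block M 1 1", auto)
  have dims: "dim_row M = 1 + (n-1)" "dim_col M = 1 + (n-1)" using M n by auto
  note spl = split_block[OF sb dims]
  have A1: "A1 = mat 1 1 (\<lambda>_. s)"
    using sb col[of 0] n M unfolding split_block_def Let_def by (auto intro!: eq_matI)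
  have A0: "A0 = 0\<^sub>m (n-1) 1"
    using sb col M n unfolding split_block_def Let_def by (auto intro!: eq_matI)
  have A3: "A3 = mat (n-1) (n-1) (\<lambda>(i,j). M $$ (Suc i, Suc j))"
    using sb M unfolding split_block_def Let_def by (auto intro!: eq_matI)
  have "char_poly M = char_poly (four_block_mat A1 A2 (0\<^sub>m (n-1) 1) A3)"
    using spl(5) A0 by simp
  also have "\<dots> = char_poly A1 * char_poly A3"
    by (rule char_poly_four_block_zeros_col, insert spl, auto)
  also have "char_poly A1 = [:-s,1:]"
    by (simp add: A1 char_poly_defs det_def sign_def)
  finally show ?thesis unfolding A3 .
qed

lemma conj_cancel: fixes A T U :: "'a::semiring_1 mat"
  assumes A: "A \<in> carrier_mat n n" and T: "T \<in> carrier_mat n n" and U: "U \<in> carrier_mat n n"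
  and TU: "T * U = 1\<^sub>m n"
  shows "T * (U * A * T) * U = A"
proof -
  have UA: "U * A \<in> carrier_mat n n" using U A by auto
  have UAT: "U * A * T \<in> carrier_mat n n" using UA T by auto
  have "T * (U * A * T) * U = T * (U * A * T * U)" by (rule assoc_mult_mat[OF T UAT U])
  also have "U * A * T * U = U * A * (T * U)" by (rule assoc_mult_mat[OF UA T U])
  also have "\<dots> = U * A" using UA TU by (simp add: right_mult_one_mat[OF UA])
  also have "T * (U * A) = T * U * A" by (rule assoc_mult_mat[OF T U A, symmetric])
  also have "\<dots> = A" using TU A by simp
  finally show ?thesis .
qed

definition Pc :: "nat \<Rightarrow> nat \<Rightarrow> (nat \<Rightarrow> nat \<Rightarrow> bool) \<Rightarrow> complex mat" where
  "Pc n d E = map_mat complex_of_real (transition_matrix n d E)"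
definition Sc :: "nat \<Rightarrow> nat \<Rightarrow> (nat \<Rightarrow> nat \<Rightarrow> bool) \<Rightarrow> complex mat" where
  "Sc n d E = mat n n (\<lambda>(i,j). complex_of_real ((if E i j then 1 / real d else 0) - 1 / real n))"

lemma Pc_carrier[simp]: "Pc n d E \<in> carrier_mat n n" by (simp add: Pc_def transition_matrix_def)
lemma Sc_carrier[simp]: "Sc n d E \<in> carrier_mat n n" by (simp add: Sc_def)

lemma reg_nbrs: assumes "regular_graph n d E" "i < n"
  shows "{k. k < n \<and> E i k} = {k. E i k}" "card {k. E i k} = d" "finite {k. E i k}"
proof -
  show 1: "{k. k < n \<and> E i k} = {k. E i k}" using assms unfolding regular_graph_def by auto
  show "card {k. E i k} = d" using assms unfolding regular_graph_def by auto
  show "finite {k. E i k}" unfolding 1[symmetric] by auto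
qed

lemma reg_rowsum: assumes "regular_graph n d E" "i < n" "d > 0"
  shows "(\<Sum>k<n. (if E i k then 1 / real d else 0)) = 1"
proof -
  have "(\<Sum>k<n. (if E i k then 1 / real d else 0)) = (\<Sum>k\<in>{k. k < n \<and> E i k}. 1 / real d)"
    by (simp add: sum.If_cases lessThan_def Collect_conj_eq Int_commute)
  also have "\<dots> = real (card {k. E i k}) / real d" using reg_nbrs[OF assms(1,2)] by simp
  finally show ?thesis using reg_nbrs[OF assms(1,2)] assms(3) by simp
qed

lemma charpoly_S: assumes reg: "regular_graph n d E" and d: "d > 0" and n: "n > 0"
  and cp: "char_poly (Pc n d E) = [:-1,1:] * q"
  shows "char_poly (Sc n d E) = [:0,1:] * q"
proof -
  let ?P = "Pc n d E" and ?S = "Sc n d E" and ?U = "Um n" and ?T = "Tm n"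
  define M where "M = ?U * ?P * ?T"
  define M' where "M' = ?U * ?S * ?T"
  have M: "M \<in> carrier_mat n n" and M': "M' \<in> carrier_mat n n" unfolding M_def M'_def 
    by (auto intro!: mult_carrier_mat[of _ n n _ n] Um_carrier Tm_carrier Pc_carrier Sc_carrier)
  have rsP: "\<And>l. l < n \<Longrightarrow> (\<Sum>k<n. ?P $$ (l,k)) = 1"
  proof -
    fix l assume l: "l < n"
    have "(\<Sum>k<n. ?P $$ (l,k)) = (\<Sum>k<n. complex_of_real (if E l k then 1 / real d else 0))"
      by (rule sum.cong, insert l, auto simp: Pc_def transition_matrix_def)
    also have "\<dots> = complex_of_real (\<Sum>k<n. (if E l k then 1 / real d else 0))" by simp
    also have "\<dots> = 1" using reg_rowsum[OF reg l d] by simp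
    finally show "(\<Sum>k<n. ?P $$ (l,k)) = 1" .
  qed
  have diff: "\<And>l k. l < n \<Longrightarrow> k < n \<Longrightarrow> ?S $$ (l,k) = ?P $$ (l,k) - 1 / of_nat n"
    by (auto simp: Sc_def Pc_def transition_matrix_def)
  have rsS: "\<And>l. l < n \<Longrightarrow> (\<Sum>k<n. ?S $$ (l,k)) = 0"
    using n by (simp add: diff sum_subtractf rsP)
  have sim: "similar_mat ?P M"
  proof (rule similar_matI[of _ _ ?T ?U n])
    show "{?P, M, ?T, ?U} \<subseteq> carrier_mat n n" using M by auto
    show "?T * ?U = 1\<^sub>m n" by (rule TU[OF n])
    show "?U * ?T = 1\<^sub>m n" by (rule UT[OF n])
    show "?P = ?T * M * ?U" unfolding M_def by (rule conj_cancel[symmetric], auto simp: TU[OF n])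
  qed
  have sim': "similar_mat ?S M'"
  proof (rule similar_matI[of _ _ ?T ?U n])
    show "{?S, M', ?T, ?U} \<subseteq> carrier_mat n n" using M' by auto
    show "?T * ?U = 1\<^sub>m n" by (rule TU[OF n])
    show "?U * ?T = 1\<^sub>m n" by (rule UT[OF n])
    show "?S = ?T * M' * ?U" unfolding M'_def by (rule conj_cancel[symmetric], auto simp: TU[OF n])
  qed
  define A3 where "A3 = mat (n-1) (n-1) (\<lambda>(i,j). M $$ (Suc i, Suc j))"
  have c1: "char_poly M = [:-1,1:] * char_poly A3" unfolding A3_def
    by (rule char_poly_col0[OF M n], unfold M_def, rule UAT_col0[OF Pc_carrier _ rsP], auto)
  have c2: "char_poly M' = [:-0,1:] * char_poly (mat (n-1) (n-1) (\<lambda>(i,j). M' $$ (Suc i, Suc j)))"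
    by (rule char_poly_col0[OF M' n], unfold M'_def, rule UAT_col0[OF Sc_carrier _ rsS], auto)
  have "mat (n-1) (n-1) (\<lambda>(i,j). M' $$ (Suc i, Suc j)) = A3"
    unfolding A3_def M_def M'_def
    by (rule eq_matI, auto intro!: UAT_diff[OF Pc_carrier Sc_carrier _ _ _ diff])
  hence c2: "char_poly M' = [:0,1:] * char_poly A3" using c2 by simp
  have "[:-1,1:] * q = [:-1,1:] * char_poly A3" using cp c1 char_poly_similar[OF sim] by simp
  hence "q = char_poly A3" by (metis mult_cancel_left pCons_eq_0_iff zero_neq_one)
  thus ?thesis using c2 char_poly_similar[OF sim'] by simp
qed


fun mpow :: "(nat \<Rightarrow> nat \<Rightarrow> real) \<Rightarrow> nat \<Rightarrow> nat \<Rightarrow> nat \<Rightarrow> nat \<Rightarrow> real" where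
  "mpow M n 0 x y = (if x = y then 1 else 0)"
| "mpow M n (Suc k) x y = (\<Sum>z<n. mpow M n k x z * M z y)"

lemma mpow_cong: assumes "\<And>i j. i < n \<Longrightarrow> j < n \<Longrightarrow> M i j = M' i j" and "y < n"
  shows "mpow M n k x y = mpow M' n k x y"
  using assms(2) by (induct k arbitrary: y, auto simp: assms(1) intro!: sum.cong)

lemma mpow_scale: "mpow (\<lambda>i j. c * M i j) n k x y = c ^ k * mpow M n k x y"
  by (induct k arbitrary: y, auto simp: sum_distrib_left algebra_simps intro!: sum.cong)

lemma mpow_mat: assumes A: "A \<in> carrier_mat n n" and x: "x < n" and y: "y < n"
  shows "(A ^\<^sub>m k) $$ (x,y) = mpow (\<lambda>i j. A $$ (i,j)) n k x y"
  using y
proof (induct k arbitrary: y)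
  case 0 thus ?case using A x by auto
next
  case (Suc k)
  have "(A ^\<^sub>m Suc k) $$ (x,y) = (\<Sum>z<n. (A ^\<^sub>m k) $$ (x,z) * A $$ (z,y))"
    by (simp only: pow_mat.simps, rule mult_entry, insert A x Suc, auto)
  also have "\<dots> = (\<Sum>z<n. mpow (\<lambda>i j. A $$ (i,j)) n k x z * A $$ (z,y))"
    by (rule sum.cong, auto simp: Suc)
  finally show ?case by simp
qed

definition Sf :: "nat \<Rightarrow> nat \<Rightarrow> (nat \<Rightarrow> nat \<Rightarrow> bool) \<Rightarrow> nat \<Rightarrow> nat \<Rightarrow> real" where
  "Sf n d E i j = (if E i j then 1 / real d else 0) - 1 / real n"

lemma spec_bound: assumes reg: "regular_graph n d E" and d: "d > 0" and n: "n > 0"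
  and sb: "spectral_bound (transition_matrix n d E) rho" and r1: "0 < r1" "rho \<le> r1"
  shows "\<exists>c1 c2. \<forall>k x y. x < n \<longrightarrow> y < n \<longrightarrow> \<bar>mpow (Sf n d E) n k x y\<bar> \<le> r1 ^ k * (c1 + c2 * real k ^ (n - 1))"
proof -
  from sb obtain q where cpP: "char_poly (Pc n d E) = [:-1,1:] * q" and qr: "\<And>z. poly q z = 0 \<Longrightarrow> cmod z \<le> rho"
    unfolding spectral_bound_def Pc_def by auto
  have cpS: "char_poly (Sc n d E) = [:0,1:] * q" by (rule charpoly_S[OF reg d n cpP])
  define Br where "Br = mat n n (\<lambda>(i,j). Sf n d E i j / r1)"
  define Bc where "Bc = map_mat complex_of_real Br"
  have Br: "Br \<in> carrier_mat n n" unfolding Br_def by auto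
  have Bc: "Bc \<in> carrier_mat n n" unfolding Bc_def Br_def by auto
  have ScBc: "\<And>i k. i < n \<Longrightarrow> k < n \<Longrightarrow> Sc n d E $$ (i,k) = complex_of_real r1 * Bc $$ (i,k)"
    using r1 by (auto simp: Sc_def Bc_def Br_def Sf_def)
  have ev: "cmod mu \<le> 1" if "eigenvalue Bc mu" for mu
  proof -
    from that obtain v where "eigenvector Bc v mu" unfolding eigenvalue_def by auto
    hence v: "v \<in> carrier_vec n" "v \<noteq> 0\<^sub>v n" and e: "Bc *\<^sub>v v = mu \<cdot>\<^sub>v v"
      unfolding eigenvector_def using Bc by auto
    have "Sc n d E *\<^sub>v v = (complex_of_real r1 * mu) \<cdot>\<^sub>v v"
    proof (rule eq_vecI)
      fix i assume "i < dim_vec ((complex_of_real r1 * mu) \<cdot>\<^sub>v v)"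
      hence i: "i < n" using v by auto
      have "(Sc n d E *\<^sub>v v) $ i = (\<Sum>k<n. Sc n d E $$ (i,k) * v $ k)"
        using i v by (auto simp: scalar_prod_def atLeast0LessThan Sc_def)
      also have "\<dots> = complex_of_real r1 * (\<Sum>k<n. Bc $$ (i,k) * v $ k)"
        by (auto simp: sum_distrib_left ScBc i algebra_simps intro!: sum.cong)
      also have "(\<Sum>k<n. Bc $$ (i,k) * v $ k) = (Bc *\<^sub>v v) $ i"
        using i v Bc by (auto simp: scalar_prod_def atLeast0LessThan)
      also have "\<dots> = mu * v $ i" using e i v by simp
      finally show "(Sc n d E *\<^sub>v v) $ i = ((complex_of_real r1 * mu) \<cdot>\<^sub>v v) $ i"
        using i v by simp
    qed (insert v, auto simp: Sc_def)
    hence "eigenvector (Sc n d E) v (complex_of_real r1 * mu)" using v unfolding eigenvector_def by (auto simp: Sc_def)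
    hence "eigenvalue (Sc n d E) (complex_of_real r1 * mu)" unfolding eigenvalue_def by auto
    hence "poly (char_poly (Sc n d E)) (complex_of_real r1 * mu) = 0"
      using eigenvalue_root_char_poly[OF Sc_carrier] by auto
    hence "complex_of_real r1 * mu = 0 \<or> poly q (complex_of_real r1 * mu) = 0"
      unfolding cpS by auto
    thus "cmod mu \<le> 1"
    proof
      assume "complex_of_real r1 * mu = 0" thus ?thesis using r1 by auto
    next
      assume "poly q (complex_of_real r1 * mu) = 0"
      from qr[OF this] have "r1 * cmod mu \<le> rho" using r1 by (simp add: norm_mult)
      hence "r1 * cmod mu \<le> r1 * 1" using r1 by linarith
      thus ?thesis using r1 mult_le_cancel_left_pos by blast
    qed
  qed
  have sr: "spectral_radius Bc \<le> 1"
    using spectral_radius_mem_max(1)[OF Bc n] ev unfolding spectrum_def by auto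
  from spectral_radius_jnf_norm_bound_le_1_upper_triangular[OF Bc sr]
  obtain c1 c2 where nb: "\<And>k. norm_bound (Bc ^\<^sub>m k) (c1 + c2 * of_nat k ^ (n - 1))" by auto
  show ?thesis
  proof (intro exI allI impI)
    fix k x y assume x: "x < n" and y: "y < n"
    have "Bc ^\<^sub>m k = map_mat complex_of_real (Br ^\<^sub>m k)" unfolding Bc_def
      by (rule of_real_hom.mat_hom_pow[OF Br, symmetric])
    hence "(Bc ^\<^sub>m k) $$ (x,y) = complex_of_real ((Br ^\<^sub>m k) $$ (x,y))" using x y Br by auto
    also have "(Br ^\<^sub>m k) $$ (x,y) = mpow (\<lambda>i j. Br $$ (i,j)) n k x y" by (rule mpow_mat[OF Br x y])
    also have "\<dots> = mpow (\<lambda>i j. (1 / r1) * Sf n d E i j) n k x y"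
      by (rule mpow_cong[OF _ y], auto simp: Br_def)
    also have "\<dots> = (1 / r1) ^ k * mpow (Sf n d E) n k x y" by (rule mpow_scale)
    finally have eq: "(Bc ^\<^sub>m k) $$ (x,y) = complex_of_real ((1 / r1) ^ k * mpow (Sf n d E) n k x y)" .
    from nb[of k] x y Bc have "norm ((Bc ^\<^sub>m k) $$ (x,y)) \<le> c1 + c2 * of_nat k ^ (n - 1)"
      unfolding norm_bound_def by auto
    hence "\<bar>(1 / r1) ^ k * mpow (Sf n d E) n k x y\<bar> \<le> c1 + c2 * real k ^ (n - 1)"
      unfolding eq norm_of_real .
    hence "(1 / r1) ^ k * \<bar>mpow (Sf n d E) n k x y\<bar> \<le> c1 + c2 * real k ^ (n - 1)"
      using r1 by (simp add: abs_mult)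
    hence "r1 ^ k * ((1 / r1) ^ k * \<bar>mpow (Sf n d E) n k x y\<bar>) \<le> r1 ^ k * (c1 + c2 * real k ^ (n - 1))"
      using r1 by (intro mult_left_mono, auto)
    thus "\<bar>mpow (Sf n d E) n k x y\<bar> \<le> r1 ^ k * (c1 + c2 * real k ^ (n - 1))"
      using r1 by (simp add: power_one_over field_simps)
  qed
qed


lemma mpow_left: assumes "x < n" "y < n"
  shows "mpow M n (Suc k) x y = (\<Sum>z<n. M x z * mpow M n k z y)"
  using assms(2)
proof (induct k arbitrary: y)
  case 0
  have "(\<Sum>z<n. (if x = z then 1 else 0) * M z y) = (\<Sum>z<n. if x = z then M x y else 0)"
    by (rule sum.cong, auto)
  hence "(\<Sum>z<n. (if x = z then 1 else 0) * M z y) = M x y" using assms(1) by (simp add: sdelta2)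
  moreover have "(\<Sum>z<n. M x z * (if z = y then 1 else 0)) = (\<Sum>z<n. if z = y then M x y else 0)"
    by (rule sum.cong, auto)
  moreover have "\<dots> = M x y" using 0 by (simp add: sdelta1)
  ultimately show ?case by simp
next
  case (Suc k)
  have "mpow M n (Suc (Suc k)) x y = (\<Sum>z<n. mpow M n (Suc k) x z * M z y)"
    by (subst mpow.simps(2), rule refl)
  also have "\<dots> = (\<Sum>z<n. (\<Sum>w<n. M x w * mpow M n k w z) * M z y)"
  proof (rule sum.cong[OF refl])
    fix z assume "z \<in> {..<n}"
    hence "mpow M n (Suc k) x z = (\<Sum>w<n. M x w * mpow M n k w z)" by (intro Suc(1), auto)
    thus "mpow M n (Suc k) x z * M z y = (\<Sum>w<n. M x w * mpow M n k w z) * M z y"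
      by (rule arg_cong[where f="\<lambda>t. t * M z y"])
  qed
  also have "\<dots> = (\<Sum>w<n. M x w * (\<Sum>z<n. mpow M n k w z * M z y))"
    by (simp add: sum_distrib_left sum_distrib_right algebra_simps, rule sum.swap)
  finally show ?case by simp
qed

lemma cauchy_schwarz_sum: fixes a b :: "nat \<Rightarrow> real"
  shows "(\<Sum>i\<in>A. a i * b i)^2 \<le> (\<Sum>i\<in>A. (a i)^2) * (\<Sum>i\<in>A. (b i)^2)"
proof (cases "finite A")
  case fin: True
  define Sa where "Sa = (\<Sum>i\<in>A. (a i)^2)"
  define Sb where "Sb = (\<Sum>i\<in>A. (b i)^2)"
  define C where "C = (\<Sum>i\<in>A. a i * b i)"
  have Sa0: "Sa \<ge> 0" unfolding Sa_def by (rule sum_nonneg, auto)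
  show ?thesis
  proof (cases "Sa = 0")
    case True
    hence "\<forall>i\<in>A. (a i)^2 = 0" using fin unfolding Sa_def by (subst sum_nonneg_eq_0_iff[symmetric], auto)
    hence "C = 0" unfolding C_def by auto
    thus ?thesis unfolding C_def[symmetric] Sa_def[symmetric] using True by simp
  next
    case False
    hence Sa: "Sa > 0" using Sa0 by auto
    define t where "t = C / Sa"
    have "0 \<le> (\<Sum>i\<in>A. (t * a i - b i)^2)" by (rule sum_nonneg, auto)
    also have "\<dots> = t^2 * Sa - 2 * t * C + Sb"
      unfolding Sa_def Sb_def C_def
      by (simp add: power2_diff sum.distrib sum_subtractf sum_distrib_left algebra_simps power_mult_distrib)
    also have "\<dots> = Sb - C^2 / Sa" unfolding t_def using Sa by (simp add: field_simps power2_eq_square)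
    finally have "C^2 / Sa \<le> Sb" by simp
    hence "C^2 \<le> Sb * Sa" using Sa by (simp add: field_simps)
    thus ?thesis unfolding C_def[symmetric] Sa_def[symmetric] Sb_def[symmetric] by (simp add: mult.commute)
  qed
qed simp

lemma logconvex: fixes a :: "nat \<Rightarrow> real"
  assumes nn: "\<And>k. a k \<ge> 0" and lc: "\<And>k. (a (Suc k))^2 \<le> a k * a (Suc (Suc k))"
  shows "a 1 ^ k * a 0 \<le> a 0 ^ k * a k"
proof -
  have step: "a 1 * a k \<le> a 0 * a (Suc k)" for k
  proof (induct k)
    case 0 thus ?case by (simp add: mult.commute)
  next
    case (Suc k)
    show ?case
    proof (cases "a (Suc k) = 0")
      case True thus ?thesis using nn by (simp add: mult_nonneg_nonneg)
    next
      case False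
      hence pos: "a (Suc k) > 0" using nn[of "Suc k"] by auto
      have "a 1 * a (Suc k) * a (Suc k) = a 1 * (a (Suc k))^2" by (simp add: power2_eq_square)
      also have "\<dots> \<le> a 1 * (a k * a (Suc (Suc k)))" by (rule mult_left_mono[OF lc nn])
      also have "\<dots> = (a 1 * a k) * a (Suc (Suc k))" by simp
      also have "\<dots> \<le> (a 0 * a (Suc k)) * a (Suc (Suc k))" by (rule mult_right_mono[OF Suc nn])
      finally have "(a 1 * a (Suc k)) * a (Suc k) \<le> (a 0 * a (Suc (Suc k))) * a (Suc k)" by (simp add: algebra_simps)
      thus ?thesis using pos by simp
    qed
  qed
  show ?thesis
  proof (induct k)
    case 0 thus ?case by simp
  next
    case (Suc k)
    have "a 1 ^ Suc k * a 0 = a 1 * (a 1 ^ k * a 0)" by simp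
    also have "\<dots> \<le> a 1 * (a 0 ^ k * a k)" by (rule mult_left_mono[OF Suc nn])
    also have "\<dots> = a 0 ^ k * (a 1 * a k)" by simp
    also have "\<dots> \<le> a 0 ^ k * (a 0 * a (Suc k))" by (rule mult_left_mono[OF step], insert nn, simp)
    finally show ?case by (simp add: mult_ac)
  qed
qed

lemma exists_k: fixes A :: real assumes th: "theta > 1" and A: "A \<ge> 0"
  shows "\<exists>k\<ge>1. A * real k ^ p \<le> theta ^ k"
proof -
  define L where "L = ln theta"
  have L: "L > 0" using th unfolding L_def by auto
  have lim1: "filterlim (\<lambda>k::nat. L * real k) at_top sequentially"
    by (rule filterlim_tendsto_pos_mult_at_top[OF tendsto_const L filterlim_real_sequentially])
  have "((\<lambda>x::real. x ^ p / exp x) \<longlongrightarrow> 0) at_top" by (rule tendsto_power_div_exp_0)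
  from filterlim_compose[OF this lim1]
  have "((\<lambda>k. (L * real k) ^ p / exp (L * real k)) \<longlongrightarrow> 0) sequentially" .
  moreover have pos: "L ^ p / (A + 1) > 0" using L A by auto
  ultimately have "eventually (\<lambda>k. (L * real k) ^ p / exp (L * real k) < L ^ p / (A + 1)) sequentially"
    by (rule order_tendstoD(2))
  then obtain N where N: "\<And>k. k \<ge> N \<Longrightarrow> (L * real k) ^ p / exp (L * real k) < L ^ p / (A + 1)"
    unfolding eventually_sequentially by auto
  define k where "k = max N 1"
  have k1: "k \<ge> 1" unfolding k_def by auto
  from N[of k] have lt: "(L * real k) ^ p / exp (L * real k) < L ^ p / (A + 1)"
    unfolding k_def by auto
  have ex: "exp (L * real k) = theta ^ k" unfolding L_def using th
    by (subst mult.commute, simp add: exp_of_nat_mult)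
  have tp: "theta ^ k > 0" using th by auto
  from lt have "real k ^ p * L ^ p / theta ^ k < L ^ p / (A + 1)" unfolding ex by (simp add: power_mult_distrib mult.commute)
  hence "real k ^ p * L ^ p * (A + 1) < L ^ p * theta ^ k" using tp A by (simp add: field_simps)
  hence "L ^ p * (real k ^ p * (A + 1)) < L ^ p * theta ^ k" by (simp add: algebra_simps)
  hence "real k ^ p * (A + 1) < theta ^ k" using L by (simp add: mult_less_cancel_left_pos)
  hence "A * real k ^ p < theta ^ k" using A by (smt (verit, best) mult_nonneg_nonneg zero_le_power of_nat_0_le_iff distrib_left mult.commute)
  thus ?thesis using k1 by (intro exI[of _ k], auto)
qed



lemma bootstrap:
  fixes S :: "nat \<Rightarrow> nat \<Rightarrow> real" and f :: "nat \<Rightarrow> real"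
  assumes n: "n > 0" and sym: "\<And>i j. i < n \<Longrightarrow> j < n \<Longrightarrow> S i j = S j i"
  and bnd: "\<And>k x y. x < n \<Longrightarrow> y < n \<Longrightarrow> \<bar>mpow S n k x y\<bar> \<le> r1 ^ k * (c1 + c2 * real k ^ m)"
  and r1: "0 < r1" "r1 < r"
  shows "(\<Sum>x<n. (\<Sum>y<n. S x y * f y)^2) \<le> r^2 * (\<Sum>x<n. (f x)^2)"
proof -
  define h where "h k x = (\<Sum>y<n. mpow S n k x y * f y)" for k x
  define a where "a k = (\<Sum>x<n. (h k x)^2)" for k
  define B where "B k = r1 ^ k * (c1 + c2 * real k ^ m)" for k
  have h0: "h 0 x = f x" if "x < n" for x
  proof -
    have "h 0 x = (\<Sum>y<n. if x = y then f x else 0)" unfolding h_def by (rule sum.cong, auto)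
    thus ?thesis using that by (simp add: sdelta2)
  qed
  have hS: "h (Suc k) x = (\<Sum>z<n. S x z * h k z)" if x: "x < n" for k x
  proof -
    have "h (Suc k) x = (\<Sum>y<n. (\<Sum>z<n. S x z * mpow S n k z y) * f y)"
      unfolding h_def by (rule sum.cong[OF refl], subst mpow_left[OF x], auto)
    also have "\<dots> = (\<Sum>z<n. S x z * h k z)"
      unfolding h_def by (simp add: sum_distrib_left sum_distrib_right algebra_simps, rule sum.swap)
    finally show ?thesis .
  qed
  have a1: "a 1 = (\<Sum>x<n. (\<Sum>y<n. S x y * f y)^2)"
    unfolding a_def by (rule sum.cong, auto simp: hS h0 intro!: sum.cong arg_cong[where f="\<lambda>t. t^2"])
  have a0: "a 0 = (\<Sum>x<n. (f x)^2)" unfolding a_def by (rule sum.cong, auto simp: h0)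
  have nn: "a k \<ge> 0" for k unfolding a_def by (rule sum_nonneg, auto)
  have inner: "a (Suc k) = (\<Sum>z<n. h k z * h (Suc (Suc k)) z)" for k
  proof -
    have "a (Suc k) = (\<Sum>x<n. h (Suc k) x * (\<Sum>z<n. S x z * h k z))"
      unfolding a_def by (rule sum.cong, auto simp: hS[symmetric] power2_eq_square)
    also have "\<dots> = (\<Sum>z<n. h k z * (\<Sum>x<n. S z x * h (Suc k) x))"
      by (simp add: sum_distrib_left algebra_simps, subst sum.swap, 
          auto intro!: sum.cong simp: sym)
    also have "\<dots> = (\<Sum>z<n. h k z * h (Suc (Suc k)) z)"
      by (rule sum.cong, auto simp: hS)
    finally show ?thesis .
  qed
  have lc: "(a (Suc k))^2 \<le> a k * a (Suc (Suc k))" for k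
  proof -
    have "(a (Suc k))^2 = (\<Sum>z<n. h k z * h (Suc (Suc k)) z)^2" by (simp only: inner)
    also have "\<dots> \<le> (\<Sum>z<n. (h k z)^2) * (\<Sum>z<n. (h (Suc (Suc k)) z)^2)" by (rule cauchy_schwarz_sum)
    also have "\<dots> = a k * a (Suc (Suc k))" by (simp only: a_def)
    finally show ?thesis .
  qed
  have B0: "B k \<ge> 0" for k using bnd[OF n n, of k] unfolding B_def by linarith
  have hb: "(h k x)^2 \<le> (B k)^2 * (real n * a 0)" if x: "x < n" for k x
  proof -
    have "\<bar>h k x\<bar> \<le> (\<Sum>y<n. \<bar>mpow S n k x y * f y\<bar>)" unfolding h_def by (rule sum_abs)
    also have "\<dots> \<le> (\<Sum>y<n. B k * \<bar>f y\<bar>)"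
      by (rule sum_mono, auto simp: abs_mult B_def intro!: mult_right_mono bnd x)
    also have "\<dots> = B k * (\<Sum>y<n. 1 * \<bar>f y\<bar>)" by (simp add: sum_distrib_left)
    finally have le: "\<bar>h k x\<bar> \<le> B k * (\<Sum>y<n. 1 * \<bar>f y\<bar>)" .
    have "(\<Sum>y<n. 1 * \<bar>f y\<bar>)^2 \<le> (\<Sum>y<n. 1^2) * (\<Sum>y<n. \<bar>f y\<bar>^2)" by (rule cauchy_schwarz_sum)
    also have "\<dots> = real n * a 0" unfolding a0 by simp
    finally have cs: "(\<Sum>y<n. 1 * \<bar>f y\<bar>)^2 \<le> real n * a 0" .
    have "(h k x)^2 = \<bar>h k x\<bar>^2" by simp
    also have "\<dots> \<le> (B k * (\<Sum>y<n. 1 * \<bar>f y\<bar>))^2" by (rule power_mono[OF le], auto)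
    also have "\<dots> = (B k)^2 * (\<Sum>y<n. 1 * \<bar>f y\<bar>)^2" by (simp add: power_mult_distrib)
    also have "\<dots> \<le> (B k)^2 * (real n * a 0)" by (rule mult_left_mono[OF cs], auto)
    finally show ?thesis .
  qed
  have ab: "a k \<le> real n * (B k)^2 * (real n * a 0)" for k
  proof -
    have "a k \<le> (\<Sum>x<n. (B k)^2 * (real n * a 0))" unfolding a_def[of k] by (rule sum_mono, rule hb, auto)
    thus ?thesis by simp
  qed
  show ?thesis
  proof (cases "a 0 = 0")
    case True
    from ab[of 1] True nn[of 1] have "a 1 = 0" by simp
    thus ?thesis using a1 a0 True by simp
  next
    case False
    hence a0p: "a 0 > 0" using nn[of 0] by auto
    define K where "K = real n ^ 2 * (\<bar>c1\<bar> + \<bar>c2\<bar>)^2"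
    have th: "(r / r1)^2 > 1" using r1 by (simp add: one_less_power)
    obtain k where k1: "k \<ge> 1" and kb: "K * real k ^ (2 * m) \<le> ((r / r1)^2) ^ k"
      using exists_k[OF th, of K "2 * m"] unfolding K_def by auto
    have km: "real k ^ m \<ge> 1" using k1 by (simp add: one_le_power)
    have t1: "\<bar>c1 + c2 * real k ^ m\<bar> \<le> \<bar>c1\<bar> + \<bar>c2\<bar> * real k ^ m"
      using abs_triangle_ineq[of c1 "c2 * real k ^ m"] by (simp add: abs_mult)
    have t2: "\<bar>c1\<bar> * 1 \<le> \<bar>c1\<bar> * real k ^ m" by (rule mult_left_mono[OF km], simp)
    have cb: "\<bar>c1 + c2 * real k ^ m\<bar> \<le> (\<bar>c1\<bar> + \<bar>c2\<bar>) * real k ^ m"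
      using t1 t2 by (simp add: algebra_simps)
    have "real n * (B k)^2 * real n = real n ^ 2 * (r1 ^ k)^2 * \<bar>c1 + c2 * real k ^ m\<bar>^2"
      unfolding B_def by (simp add: power2_eq_square algebra_simps)
    also have "\<dots> \<le> real n ^ 2 * (r1 ^ k)^2 * ((\<bar>c1\<bar> + \<bar>c2\<bar>) * real k ^ m)^2"
      by (rule mult_left_mono, rule power_mono[OF cb], auto)
    also have "\<dots> = (r1 ^ k)^2 * (K * real k ^ (2 * m))" unfolding K_def
      by (simp only: power_mult_distrib power_mult mult_ac)
    also have "\<dots> \<le> (r1 ^ k)^2 * ((r / r1)^2) ^ k" by (rule mult_left_mono[OF kb], auto)
    also have "\<dots> = (r^2) ^ k" using r1 by (simp add: power_mult_distrib power_divide field_simps flip: power_mult)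
    finally have nb: "real n * (B k)^2 * real n \<le> (r^2) ^ k" .
    have "a 1 ^ k * a 0 \<le> a 0 ^ k * a k" by (rule logconvex[where a=a, OF nn lc])
    also have "\<dots> \<le> a 0 ^ k * (real n * (B k)^2 * (real n * a 0))" by (rule mult_left_mono[OF ab], insert nn, auto)
    also have "\<dots> = a 0 ^ k * (real n * (B k)^2 * real n) * a 0" by simp
    also have "\<dots> \<le> a 0 ^ k * (r^2) ^ k * a 0"
      by (intro mult_right_mono mult_left_mono nb, insert nn, auto)
    finally have "a 1 ^ k * a 0 \<le> (a 0 * r^2) ^ k * a 0" by (simp add: power_mult_distrib)
    hence "a 1 ^ k \<le> (a 0 * r^2) ^ k" using a0p by simp
    moreover obtain k' where "k = Suc k'" using k1 by (cases k, auto)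
    ultimately have "a 1 ^ Suc k' \<le> (a 0 * r^2) ^ Suc k'" by simp
    hence "a 1 \<le> a 0 * r^2" by (rule power_le_imp_le_base, insert a0p, auto)
    thus ?thesis using a1 a0 by (simp add: mult.commute)
  qed
qed


definition Pm :: "nat \<Rightarrow> (nat \<Rightarrow> nat \<Rightarrow> bool) \<Rightarrow> nat \<Rightarrow> nat \<Rightarrow> real" where
  "Pm d E x y = (if E x y then 1 / real d else 0)"

lemma contraction:
  assumes reg: "regular_graph n d E" and d: "d > 0" and n: "n > 0"
  and sb: "spectral_bound (transition_matrix n d E) rho" and r1: "0 < r1" "rho \<le> r1" "r1 < r"
  and g: "(\<Sum>x<n. g x) = 0"
  shows "(\<Sum>x<n. (\<Sum>y<n. Pm d E x y * g y)^2) \<le> r^2 * (\<Sum>x<n. (g x)^2)"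
proof -
  from spec_bound[OF reg d n sb r1(1,2)] obtain c1 c2 where
    b: "\<And>k x y. x < n \<Longrightarrow> y < n \<Longrightarrow> \<bar>mpow (Sf n d E) n k x y\<bar> \<le> r1 ^ k * (c1 + c2 * real k ^ (n - 1))"
    by blast
  have sym: "Sf n d E i j = Sf n d E j i" for i j
    using reg unfolding Sf_def regular_graph_def by auto
  have "(\<Sum>x<n. (\<Sum>y<n. Sf n d E x y * g y)^2) \<le> r^2 * (\<Sum>x<n. (g x)^2)"
    by (rule bootstrap[OF n _ b r1(1,3)], auto simp: sym)
  moreover have "(\<Sum>y<n. Sf n d E x y * g y) = (\<Sum>y<n. Pm d E x y * g y)" for x
  proof -
    have "(\<Sum>y<n. Sf n d E x y * g y) = (\<Sum>y<n. Pm d E x y * g y) - (\<Sum>y<n. g y) / real n"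
      by (simp add: Sf_def Pm_def algebra_simps sum_subtractf sum_divide_distrib)
    thus ?thesis using g by simp
  qed
  ultimately show ?thesis by simp
qed

locale walk =
  fixes n d E v r
  assumes reg: "regular_graph n d E" and d: "d > 0" and n: "n > 0" and v: "v < n"
    and r: "0 \<le> r" "r < 1"
    and contr: "\<And>g. (\<Sum>x<n. g x) = 0 \<Longrightarrow> (\<Sum>x<n. (\<Sum>y<n. Pm d E x y * g y)^2) \<le> r^2 * (\<Sum>x<n. (g x)^2)"
begin

abbreviation "P \<equiv> Pm d E"
abbreviation "pw \<equiv> mpow P n"

lemma P_sym: "P x y = P y x" using reg unfolding Pm_def regular_graph_def by auto
lemma P_nn: "P x y \<ge> 0" unfolding Pm_def by auto
lemma P_row: "x < n \<Longrightarrow> (\<Sum>y<n. P x y) = 1" using reg_rowsum[OF reg _ d] unfolding Pm_def by auto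
lemma P_col: assumes "y < n" shows "(\<Sum>x<n. P x y) = 1"
proof -
  have "(\<Sum>x<n. P x y) = (\<Sum>x<n. P y x)" by (rule sum.cong, auto intro: P_sym)
  thus ?thesis using P_row[OF assms] by simp
qed

lemma pw_nn: "pw j x y \<ge> 0"
  by (induct j arbitrary: y, auto intro!: sum_nonneg mult_nonneg_nonneg P_nn)

lemma pw_left: "x < n \<Longrightarrow> y < n \<Longrightarrow> pw (Suc j) x y = (\<Sum>z<n. P x z * pw j z y)"
  by (rule mpow_left)

lemma pw_col: "y < n \<Longrightarrow> (\<Sum>x<n. pw j x y) = 1"
proof (induct j)
  case 0 thus ?case by (simp add: sdelta1)
next
  case (Suc j)
  have "(\<Sum>x<n. pw (Suc j) x y) = (\<Sum>x<n. \<Sum>z<n. P x z * pw j z y)"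
    by (rule sum.cong[OF refl], rule pw_left, insert Suc.prems, auto)
  also have "\<dots> = (\<Sum>z<n. (\<Sum>x<n. P x z) * pw j z y)"
    by (subst sum.swap, simp add: sum_distrib_right)
  also have "\<dots> = (\<Sum>z<n. pw j z y)" by (rule sum.cong, auto simp: P_col)
  finally show ?case using Suc by simp
qed

lemma pw_close: assumes x: "x < n" and y: "y < n"
  shows "\<bar>pw j x y - 1 / real n\<bar> \<le> r ^ j"
proof -
  define g where "g j x = pw j x y - 1 / real n" for j x
  have gs: "(\<Sum>x<n. g j x) = 0" for j unfolding g_def using n by (simp add: sum_subtractf pw_col[OF y])
  have gS: "g (Suc j) x = (\<Sum>z<n. P x z * g j z)" if x: "x < n" for j x
  proof -
    have "(\<Sum>z<n. P x z * g j z) = (\<Sum>z<n. P x z * pw j z y) - (\<Sum>z<n. P x z) / real n"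
      unfolding g_def by (simp add: algebra_simps sum_subtractf sum_divide_distrib)
    thus ?thesis unfolding g_def using pw_left[OF x y] P_row[OF x] by simp
  qed
  have sq: "(\<Sum>x<n. (g j x)^2) \<le> (r ^ j)^2" for j
  proof (induct j)
    case 0
    have "(\<Sum>x<n. (g 0 x)^2) = (\<Sum>x<n. (if x = y then 1 - 2 / real n else 0) + 1 / (real n)^2)"
      unfolding g_def by (rule sum.cong, auto simp: power2_eq_square field_simps)
    also have "\<dots> = 1 - 1 / real n" using y n by (simp add: sum.distrib sdelta1 power2_eq_square)
    also have "\<dots> \<le> 1" by simp
    finally show ?case by simp
  next
    case (Suc j)
    have "(\<Sum>x<n. (g (Suc j) x)^2) = (\<Sum>x<n. (\<Sum>z<n. P x z * g j z)^2)"
      by (rule sum.cong, auto simp: gS)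
    also have "\<dots> \<le> r^2 * (\<Sum>x<n. (g j x)^2)" by (rule contr[OF gs])
    also have "\<dots> \<le> r^2 * (r ^ j)^2" by (rule mult_left_mono[OF Suc], auto)
    also have "r^2 * (r ^ j)^2 = (r ^ Suc j)^2" by (simp add: power_mult_distrib)
    finally show ?case .
  qed
  have "(g j x)^2 \<le> (\<Sum>x<n. (g j x)^2)"
    using x by (intro member_le_sum, auto)
  also have "\<dots> \<le> (r ^ j)^2" by (rule sq)
  finally have "\<bar>g j x\<bar>^2 \<le> (r ^ j)^2" by simp
  hence "\<bar>g j x\<bar> \<le> r ^ j" by (rule power2_le_imp_le, insert r, auto)
  thus ?thesis unfolding g_def .
qed

end


context walk begin

abbreviation "aa k x \<equiv> srw_avoid {..n} (add_pendant E v n) n k x"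
definition cw :: "nat \<Rightarrow> real" where "cw x = (if x = v then real d / (real d + 1) else 1)"

lemma E_lt: "E x y \<Longrightarrow> x < n \<and> y < n" using reg unfolding regular_graph_def by auto

lemma deg: assumes x: "x < n"
  shows "card {z \<in> {..n}. add_pendant E v n x z} = d + (if x = v then 1 else 0)"
proof -
  have eq: "{z \<in> {..n}. add_pendant E v n x z} = {z. E x z} \<union> (if x = v then {n} else {})"
    using x E_lt unfolding add_pendant_def by (auto dest: E_lt)
  have fin: "finite {z. E x z}" and c: "card {z. E x z} = d" using reg_nbrs[OF reg x] by auto
  have nn: "n \<notin> {z. E x z}" using E_lt by auto
  show ?thesis unfolding eq using fin c nn by auto
qed

lemma step: assumes x: "x < n" and y: "y < n"
  shows "srw_step {..n} (add_pendant E v n) x y = cw x * P x y"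
proof -
  have "add_pendant E v n x y = E x y" using x y unfolding add_pendant_def by auto
  thus ?thesis unfolding srw_step_def deg[OF x] cw_def Pm_def using d by auto
qed

lemma a_rec: assumes x: "x < n"
  shows "aa (Suc k) x = cw x * (\<Sum>y<n. P x y * aa k y)"
proof -
  have "aa (Suc k) x = (\<Sum>y\<in>insert n {..<n}. srw_step {..n} (add_pendant E v n) x y * (if y = n then 0 else aa k y))"
    by (simp add: lessThan_Suc_atMost[symmetric] lessThan_Suc)
  also have "\<dots> = (\<Sum>y<n. srw_step {..n} (add_pendant E v n) x y * (if y = n then 0 else aa k y))"
    by (subst sum.insert, auto)
  also have "\<dots> = (\<Sum>y<n. cw x * (P x y * aa k y))"
    by (rule sum.cong, auto simp: step x)
  finally show ?thesis by (simp add: sum_distrib_left)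
qed

lemma cw_pos: "cw x > 0" using d unfolding cw_def by auto
lemma cw_le1: "cw x \<le> 1" unfolding cw_def by auto

end


lemma jensen_exp: fixes w t :: "nat \<Rightarrow> real"
  assumes w: "\<And>y. w y \<ge> 0" and ws: "(\<Sum>y<n. w y) = 1"
  shows "exp (\<Sum>y<n. w y * t y) \<le> (\<Sum>y<n. w y * exp (t y))"
proof -
  define m where "m = (\<Sum>y<n. w y * t y)"
  have "\<And>y. exp m * (1 + (t y - m)) \<le> exp (t y)"
  proof -
    fix y
    have "exp m * (1 + (t y - m)) \<le> exp m * exp (t y - m)"
      by (rule mult_left_mono[OF exp_ge_add_one_self], auto)
    also have "\<dots> = exp (t y)" by (simp add: exp_diff)
    finally show "exp m * (1 + (t y - m)) \<le> exp (t y)" .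
  qed
  hence "(\<Sum>y<n. w y * (exp m * (1 + (t y - m)))) \<le> (\<Sum>y<n. w y * exp (t y))"
    by (intro sum_mono mult_left_mono w)
  moreover have "(\<Sum>y<n. w y * (exp m * (1 + (t y - m)))) = exp m * ((\<Sum>y<n. w y) + (\<Sum>y<n. w y * t y) - m * (\<Sum>y<n. w y))"
    by (simp add: sum_distrib_left sum_distrib_right sum.distrib sum_subtractf algebra_simps)
  moreover have "\<dots> = exp m" using ws unfolding m_def by simp
  ultimately show ?thesis unfolding m_def by simp
qed

context walk begin

definition gam :: real where "gam = real d / (real d + 1)"
lemma gam: "0 < gam" "gam < 1" using d unfolding gam_def by auto

lemma cw_gam: "cw x = gam powr (if x = v then 1 else 0)"
  using gam unfolding cw_def gam_def by auto

lemma phi_rec: assumes x: "x < n"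
  shows "(\<Sum>j<Suc k. pw j x v) = (if x = v then 1 else 0) + (\<Sum>y<n. P x y * (\<Sum>j<k. pw j y v))"
proof -
  have "(\<Sum>j<Suc k. pw j x v) = pw 0 x v + (\<Sum>j<k. pw (Suc j) x v)" by (rule sum.lessThan_Suc_shift)
  also have "(\<Sum>j<k. pw (Suc j) x v) = (\<Sum>j<k. \<Sum>y<n. P x y * pw j y v)"
    by (rule sum.cong[OF refl], rule pw_left[OF x v])
  also have "\<dots> = (\<Sum>y<n. P x y * (\<Sum>j<k. pw j y v))"
    by (subst sum.swap, simp add: sum_distrib_left)
  finally show ?thesis by simp
qed

lemma claim1_gen: "x < n \<Longrightarrow> aa k x \<ge> gam powr (\<Sum>j<k. pw j x v)"
proof (induct k arbitrary: x)
  case 0 thus ?case by simp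
next
  case (Suc k)
  note x = Suc.prems
  define phi where "phi y = (\<Sum>j<k. pw j y v)" for y
  have "gam powr (\<Sum>j<Suc k. pw j x v) = gam powr (if x = v then 1 else 0) * gam powr (\<Sum>y<n. P x y * phi y)"
    unfolding phi_rec[OF x] phi_def by (rule powr_add)
  also have "gam powr (\<Sum>y<n. P x y * phi y) = exp (\<Sum>y<n. P x y * (phi y * ln gam))"
    using gam by (simp add: powr_def sum_distrib_left sum_distrib_right mult_ac)
  also have "\<dots> \<le> (\<Sum>y<n. P x y * exp (phi y * ln gam))"
    by (rule jensen_exp, rule P_nn, rule P_row[OF x])
  also have "\<dots> = (\<Sum>y<n. P x y * gam powr phi y)"
    using gam by (simp add: powr_def)
  also have "\<dots> \<le> (\<Sum>y<n. P x y * aa k y)"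
    by (rule sum_mono, rule mult_left_mono, unfold phi_def, rule Suc.hyps, auto intro: P_nn)
  finally have "gam powr (\<Sum>j<Suc k. pw j x v) \<le> cw x * (\<Sum>y<n. P x y * aa k y)"
    unfolding cw_gam by (simp add: mult_left_mono)
  thus ?case unfolding a_rec[OF x] .
qed

lemma claim1: assumes u: "u < n" and K: "K \<le> n"
  shows "aa K u \<ge> gam powr (1 + 1 / (1 - r))"
proof -
  have "(\<Sum>j<K. pw j u v) \<le> (\<Sum>j<K. 1 / real n + r ^ j)"
  proof (rule sum_mono)
    fix j show "pw j u v \<le> 1 / real n + r ^ j" using pw_close[OF u v, of j] by (simp add: abs_le_iff)
  qed
  also have "\<dots> = real K / real n + (1 - r ^ K) / (1 - r)"
    using r by (simp add: sum.distrib sum_gp_strict)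
  also have "\<dots> \<le> 1 + 1 / (1 - r)"
  proof (rule add_mono)
    show "real K / real n \<le> 1" using K n by simp
    show "(1 - r ^ K) / (1 - r) \<le> 1 / (1 - r)" using r by (intro divide_right_mono, auto)
  qed
  finally have le: "(\<Sum>j<K. pw j u v) \<le> 1 + 1 / (1 - r)" .
  have "gam powr (1 + 1 / (1 - r)) \<le> gam powr (\<Sum>j<K. pw j u v)"
    by (rule powr_mono'[OF le], insert gam, auto)
  also have "\<dots> \<le> aa K u" by (rule claim1_gen[OF u])
  finally show ?thesis .
qed

end


fun kvf :: "(nat \<Rightarrow> real) \<Rightarrow> (nat \<Rightarrow> nat \<Rightarrow> real) \<Rightarrow> nat \<Rightarrow> nat \<Rightarrow> nat \<Rightarrow> nat \<Rightarrow> real" where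
  "kvf c M n v 0 x = (if x = v then 1 else 0)"
| "kvf c M n v (Suc j) x = c x * (\<Sum>y<n. M x y * kvf c M n v j y)"

lemma split_sum: "(T::nat) \<le> n \<Longrightarrow> (\<Sum>j<n. f j) = (\<Sum>j<T. f j) + (\<Sum>j\<in>{T..<n}. f j)"
  using sum.atLeastLessThan_concat[of 0 T n f] by (simp add: lessThan_atLeast0)

lemma conv_sum: fixes k w :: "nat \<Rightarrow> real"
  shows "(\<Sum>j<N. \<Sum>i<j. k i * w (j - i)) = (\<Sum>i<N. k i * (\<Sum>m\<in>{1..<N - i}. w m))"
proof (induct N)
  case 0 show ?case by (simp only: lessThan_0 sum.empty)
next
  case (Suc N)
  have eq: "(\<Sum>m\<in>{1..<Suc N - i}. w m) = (\<Sum>m\<in>{1..<N - i}. w m) + w (N - i)" if "i < N" for i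
  proof -
    have "Suc N - i = Suc (N - i)" using that by auto
    moreover have "1 \<le> N - i" using that by auto
    ultimately show ?thesis by (simp only: sum.atLeastLessThan_Suc)
  qed
  have "(\<Sum>j<Suc N. \<Sum>i<j. k i * w (j - i)) = (\<Sum>i<N. k i * (\<Sum>m\<in>{1..<N - i}. w m)) + (\<Sum>i<N. k i * w (N - i))"
    by (simp only: sum.lessThan_Suc Suc)
  also have "\<dots> = (\<Sum>i<N. k i * (\<Sum>m\<in>{1..<N - i}. w m) + k i * w (N - i))" by (rule sum.distrib[symmetric])
  also have "\<dots> = (\<Sum>i<N. k i * (\<Sum>m\<in>{1..<Suc N - i}. w m))"
  proof (rule sum.cong[OF refl])
    fix i assume "i \<in> {..<N}"
    hence i: "i < N" by simp
    show "k i * (\<Sum>m\<in>{1..<N - i}. w m) + k i * w (N - i) = k i * (\<Sum>m\<in>{1..<Suc N - i}. w m)"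
      by (subst eq[OF i], rule distrib_left[symmetric])
  qed
  also have "\<dots> = (\<Sum>i<Suc N. k i * (\<Sum>m\<in>{1..<Suc N - i}. w m))" by (simp add: sum.lessThan_Suc)
  finally show ?case .
qed

context walk begin

abbreviation "kv \<equiv> kvf cw P n v"
definition cc :: real where "cc = 1 / (real d + 1)"

lemma cw_cc: "cw x = 1 - cc * (if x = v then 1 else 0)"
proof -
  have "1 - 1 / (real d + 1) = (real d + 1) / (real d + 1) - 1 / (real d + 1)" by simp
  also have "\<dots> = real d / (real d + 1)" by (simp only: diff_divide_distrib[symmetric], simp)
  finally show ?thesis unfolding cw_def cc_def by auto
qed

lemma kv_nn: "kv j x \<ge> 0"
  by (induct j arbitrary: x, auto intro!: mult_nonneg_nonneg sum_nonneg P_nn less_imp_le[OF cw_pos])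

lemma kv_Suc_left: "x < n \<Longrightarrow> kv (Suc j) x = cw x * (\<Sum>y<n. P x y * kv j y)" by simp

lemma a_kv: "x < n \<Longrightarrow> aa k x = 1 - cc * (\<Sum>j<k. kv j x)"
proof (induct k arbitrary: x)
  case 0 thus ?case by simp
next
  case (Suc k)
  note x = Suc.prems
  have "aa (Suc k) x = cw x * (\<Sum>y<n. P x y * (1 - cc * (\<Sum>j<k. kv j y)))"
    unfolding a_rec[OF x] by (rule arg_cong[where f="\<lambda>t. cw x * t"], rule sum.cong, auto simp: Suc.hyps)
  also have "\<dots> = cw x * (\<Sum>y<n. P x y) - cc * (\<Sum>j<k. cw x * (\<Sum>y<n. P x y * kv j y))"
    by (simp add: algebra_simps sum_subtractf sum_distrib_left sum_distrib_right, subst sum.swap, simp add: algebra_simps)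
  also have "\<dots> = cw x - cc * (\<Sum>j<k. kv (Suc j) x)" using P_row[OF x] by simp
  also have "\<dots> = 1 - cc * (kv 0 x + (\<Sum>j<k. kv (Suc j) x))" unfolding cw_cc by (simp add: algebra_simps)
  also have "kv 0 x + (\<Sum>j<k. kv (Suc j) x) = (\<Sum>j<Suc k. kv j x)" by (rule sum.lessThan_Suc_shift[symmetric])
  finally show ?case .
qed

lemma D_ident: "x < n \<Longrightarrow> pw j x v - kv j x = cc * (\<Sum>i<j. kv i x * pw (j - i) v v)"
proof (induct j arbitrary: x)
  case 0 thus ?case by simp
next
  case (Suc j)
  note x = Suc.prems
  have "pw (Suc j) x v - kv (Suc j) x = (\<Sum>y<n. P x y * pw j y v) - cw x * (\<Sum>y<n. P x y * kv j y)"
    using pw_left[OF x v] by simp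
  also have "\<dots> = cw x * (\<Sum>y<n. P x y * (pw j y v - kv j y)) + (1 - cw x) * (\<Sum>y<n. P x y * pw j y v)"
    by (simp add: algebra_simps sum_subtractf)
  also have "(\<Sum>y<n. P x y * (pw j y v - kv j y)) = (\<Sum>y<n. P x y * (cc * (\<Sum>i<j. kv i y * pw (j - i) v v)))"
    by (rule sum.cong, auto simp: Suc.hyps)
  also have "\<dots> = cc * (\<Sum>i<j. (\<Sum>y<n. P x y * kv i y) * pw (j - i) v v)"
    by (simp add: sum_distrib_left sum_distrib_right algebra_simps, subst sum.swap, simp add: algebra_simps)
  also have "cw x * (cc * (\<Sum>i<j. (\<Sum>y<n. P x y * kv i y) * pw (j - i) v v)) = cc * (\<Sum>i<j. kv (Suc i) x * pw (Suc j - Suc i) v v)"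
    by (simp add: sum_distrib_left algebra_simps)
  also have "(1 - cw x) * (\<Sum>y<n. P x y * pw j y v) = cc * (kv 0 x * pw (Suc j - 0) v v)"
    using pw_left[OF x v] unfolding cw_cc by auto
  also have "cc * (\<Sum>i<j. kv (Suc i) x * pw (Suc j - Suc i) v v) + cc * (kv 0 x * pw (Suc j - 0) v v)
     = cc * (\<Sum>i<Suc j. kv i x * pw (Suc j - i) v v)"
    by (subst sum.lessThan_Suc_shift, simp add: algebra_simps)
  finally show ?case .
qed

definition W :: real where "W = 1 + 1 / (1 - r)"

lemma Ws_bound: assumes t: "t \<le> n"
  shows "(\<Sum>m\<in>{1..<t}. 1 / real n + r ^ m) \<le> W"
proof -
  have "(\<Sum>m\<in>{1..<t}. 1 / real n + r ^ m) \<le> (\<Sum>m<t. 1 / real n + r ^ m)"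
    by (rule sum_mono2, insert r, auto)
  also have "\<dots> = real t / real n + (1 - r ^ t) / (1 - r)"
    using r by (simp add: sum.distrib sum_gp_strict)
  also have "\<dots> \<le> W" unfolding W_def
  proof (rule add_mono)
    show "real t / real n \<le> 1" using t n by simp
    show "(1 - r ^ t) / (1 - r) \<le> 1 / (1 - r)" using r by (intro divide_right_mono, auto)
  qed
  finally show ?thesis .
qed

lemma B_lower: assumes u: "u < n" and T: "4 * T \<le> n" and rT: "r ^ T \<le> (1 - r) / 4"
  shows "(\<Sum>j<n. pw j u v) \<ge> 1 / 2"
proof -
  have Tn: "T \<le> n" using T by auto
  have lb: "pw j u v \<ge> (if j < T then 0 else 1 / real n - r ^ j)" for j
    using pw_nn[of j u v] pw_close[OF u v, of j] by (auto simp: abs_le_iff)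
  have "(\<Sum>j<n. (if j < T then 0 else 1 / real n - r ^ j)) = (\<Sum>j\<in>{T..<n}. 1 / real n - r ^ j)"
    by (subst split_sum[OF Tn], auto intro!: sum.cong)
  also have "\<dots> = real (n - T) / real n - (\<Sum>j\<in>{T..<n}. r ^ j)" by (simp add: sum_subtractf)
  finally have e1: "(\<Sum>j<n. (if j < T then 0 else 1 / real n - r ^ j)) = real (n - T) / real n - (\<Sum>j\<in>{T..<n}. r ^ j)" .
  have "(\<Sum>j\<in>{T..<n}. r ^ j) = (\<Sum>j<n. r ^ j) - (\<Sum>j<T. r ^ j)" using split_sum[OF Tn, of "\<lambda>j. r ^ j"] by simp
  also have "(\<Sum>j<n. r ^ j) = (1 - r ^ n) / (1 - r)" using r by (simp add: sum_gp_strict)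
  also have "(\<Sum>j<T. r ^ j) = (1 - r ^ T) / (1 - r)" using r by (simp add: sum_gp_strict)
  also have "(1 - r ^ n) / (1 - r) - (1 - r ^ T) / (1 - r) = (r ^ T - r ^ n) / (1 - r)" by (simp add: diff_divide_distrib[symmetric])
  also have "\<dots> \<le> r ^ T / (1 - r)" using r by (intro divide_right_mono, auto)
  also have "\<dots> \<le> 1 / 4" using rT r by (simp add: field_simps)
  finally have e2: "(\<Sum>j\<in>{T..<n}. r ^ j) \<le> 1 / 4" .
  have "(\<Sum>j<n. (if j < T then 0 else 1 / real n - r ^ j)) \<ge> real (n - T) / real n - 1 / 4" using e1 e2 by linarith
  moreover have "real (n - T) / real n \<ge> 3 / 4"
  proof -
    have np: "real n > 0" using n by simp
    have t4: "real T * 4 \<le> real n" using T by linarith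
    have "3 / 4 * real n \<le> real n - real T" using t4 by linarith
    also have "real n - real T = real (n - T)" using Tn by (simp add: of_nat_diff)
    finally show ?thesis by (subst pos_le_divide_eq[OF np])
  qed
  moreover have "(\<Sum>j<n. pw j u v) \<ge> (\<Sum>j<n. (if j < T then 0 else 1 / real n - r ^ j))"
    by (rule sum_mono, rule lb)
  ultimately show ?thesis by linarith
qed


end

context walk begin
lemma claim2: assumes u: "u < n" and T: "4 * T \<le> n" and rT: "r ^ T \<le> (1 - r) / 4"
  shows "1 - aa n u \<ge> 1 / (2 * (real d + 1 + W))"
proof -
  define A where "A = (\<Sum>j<n. kv j u)"
  define B where "B = (\<Sum>j<n. pw j u v)"
  have cc: "cc > 0" unfolding cc_def by auto
  have A0: "A \<ge> 0" unfolding A_def by (rule sum_nonneg, rule kv_nn)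
  have W0: "W \<ge> 0" using r unfolding W_def by auto
  have "B - A = (\<Sum>j<n. pw j u v - kv j u)" unfolding A_def B_def by (simp add: sum_subtractf)
  also have "\<dots> = (\<Sum>j<n. cc * (\<Sum>i<j. kv i u * pw (j - i) v v))"
    by (rule sum.cong[OF refl], rule D_ident[OF u])
  also have "\<dots> = cc * (\<Sum>j<n. \<Sum>i<j. kv i u * pw (j - i) v v)"
    by (rule sum_distrib_left[symmetric])
  also have "\<dots> \<le> cc * (\<Sum>j<n. \<Sum>i<j. kv i u * (1 / real n + r ^ (j - i)))"
  proof (rule mult_left_mono[OF _ less_imp_le[OF cc]], rule sum_mono, rule sum_mono, rule mult_left_mono[OF _ kv_nn])
    fix j i show "pw (j - i) v v \<le> 1 / real n + r ^ (j - i)" using pw_close[OF v v, of "j - i"] by (simp add: abs_le_iff)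
  qed
  also have "cc * (\<Sum>j<n. \<Sum>i<j. kv i u * (1 / real n + r ^ (j - i))) = cc * (\<Sum>i<n. kv i u * (\<Sum>m\<in>{1..<n - i}. 1 / real n + r ^ m))"
    by (rule arg_cong[where f="\<lambda>t. cc * t"], rule conv_sum[where k="\<lambda>i. kv i u" and w="\<lambda>m. 1 / real n + r ^ m" and N=n])
  also have "\<dots> \<le> cc * (\<Sum>i<n. kv i u * W)"
  proof (rule mult_left_mono[OF _ less_imp_le[OF cc]], rule sum_mono)
    fix i assume "i \<in> {..<n}"
    show "kv i u * (\<Sum>m\<in>{1..<n - i}. 1 / real n + r ^ m) \<le> kv i u * W"
      by (rule mult_left_mono[OF Ws_bound kv_nn], simp)
  qed
  also have "(\<Sum>i<n. kv i u * W) = A * W" unfolding A_def by (simp add: sum_distrib_right)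
  finally have BA: "B - A \<le> cc * (A * W)" .
  have B: "B \<ge> 1 / 2" unfolding B_def by (rule B_lower[OF u T rT])
  have "aa n u = 1 - cc * A" unfolding A_def by (rule a_kv[OF u])
  hence eq: "1 - aa n u = A / (real d + 1)" unfolding cc_def by simp
  have dp: "real d + 1 > 0" by simp
  have "(B - A) * (real d + 1) \<le> cc * (A * W) * (real d + 1)" by (rule mult_right_mono[OF BA], simp)
  also have "cc * (A * W) * (real d + 1) = A * W" unfolding cc_def by simp
  finally have h2: "B * (real d + 1) \<le> A * (real d + 1 + W)" by (simp add: algebra_simps)
  have h1: "(1 / 2) * (real d + 1) \<le> B * (real d + 1)" by (rule mult_right_mono[OF B], simp)
  have h3: "(1 / 2) * (real d + 1) \<le> A * (real d + 1 + W)" using h1 h2 by (rule order_trans)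
  have "real d + 1 = 2 * ((1 / 2) * (real d + 1))" by simp
  also have "\<dots> \<le> 2 * (A * (real d + 1 + W))" by (rule mult_left_mono[OF h3], simp)
  also have "2 * (A * (real d + 1 + W)) = A * (2 * (real d + 1 + W))" by simp
  finally have le: "(real d + 1) \<le> A * (2 * (real d + 1 + W))" .
  have X: "2 * (real d + 1 + W) > 0" using W0 by simp
  have "1 / (2 * (real d + 1 + W)) = (real d + 1) / (2 * (real d + 1 + W)) / (real d + 1)" by simp
  also have "\<dots> \<le> A / (real d + 1)"
    by (rule divide_right_mono[OF _ less_imp_le[OF dp]], subst pos_divide_le_eq[OF X], rule le)
  finally have "A / (real d + 1) \<ge> 1 / (2 * (real d + 1 + W))" .
  thus ?thesis unfolding eq .
qed

end


lemma walk_results: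
  assumes reg: "regular_graph n d E" and d: "d > 0" and n: "n > 0" and v: "v < n"
    and sb: "spectral_bound (transition_matrix n d E) rho"
    and r1: "0 < r1" "rho \<le> r1" "r1 < r" and r: "r < 1"
    and u: "u < n" and K: "K \<le> n" and T: "4 * T \<le> n" and rT: "r ^ T \<le> (1 - r) / 4"
  shows "srw_avoid {..n} (add_pendant E v n) n K u \<ge> (real d / (real d + 1)) powr (1 + 1 / (1 - r))"
    and "1 - srw_avoid {..n} (add_pendant E v n) n n u \<ge> 1 / (2 * (real d + 1 + (1 + 1 / (1 - r))))"
proof -
  interpret walk n d E v r
  proof
    show "regular_graph n d E" "d > 0" "n > 0" "v < n" by fact+
    show "0 \<le> r" "r < 1" using r1 r by auto
    fix g :: "nat \<Rightarrow> real" assume "(\<Sum>x<n. g x) = 0"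
    thus "(\<Sum>x<n. (\<Sum>y<n. Pm d E x y * g y)^2) \<le> r^2 * (\<Sum>x<n. (g x)^2)"
      by (rule contraction[OF reg d n sb r1])
  qed
  show "srw_avoid {..n} (add_pendant E v n) n K u \<ge> (real d / (real d + 1)) powr (1 + 1 / (1 - r))"
    using claim1[OF u K] unfolding gam_def .
  show "1 - srw_avoid {..n} (add_pendant E v n) n n u \<ge> 1 / (2 * (real d + 1 + (1 + 1 / (1 - r))))"
    using claim2[OF u T rT] unfolding W_def .
qed

theorem lemma3p1:
  fixes d :: nat and rho :: real
  assumes "d \<ge> 3" and "rho < 1"
  shows "\<exists>\<delta>>0. \<exists>N. \<forall>n\<ge>N. \<forall>E v u.
           regular_graph n d E \<and> spectral_bound (transition_matrix n d E) rho \<and>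
           v < n \<and> u \<le> n \<and> u \<noteq> n \<longrightarrow>
             hit_time_ge_prob {..n} (add_pendant E v n) n (\<delta> * real n) u \<ge> \<delta> \<and>
             hit_time_le_prob {..n} (add_pendant E v n) n n u \<ge> \<delta>"
proof -
  define r1 where "r1 = max rho (1 / 2)"
  define r where "r = (1 + r1) / 2"
  have r1: "0 < r1" "rho \<le> r1" "r1 < r" and r: "r < 1" "0 \<le> r"
    using assms(2) unfolding r1_def r_def by auto
  have d: "d > 0" using assms(1) by auto
  define d1 where "d1 = (real d / (real d + 1)) powr (1 + 1 / (1 - r))"
  define d2 where "d2 = 1 / (2 * (real d + 1 + (1 + 1 / (1 - r))))"
  define dl where "dl = min d1 d2"
  have d1: "d1 > 0" unfolding d1_def using d by auto
  have r1p: "1 / (1 - r) > 0" using r by auto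
  define X where "X = 2 * (real d + 1 + (1 + 1 / (1 - r)))"
  have X: "X \<ge> 1" unfolding X_def using r1p by simp
  have d2: "d2 > 0" "d2 \<le> 1" unfolding d2_def X_def[symmetric] using X by auto
  have dl: "dl > 0" "dl \<le> 1" "dl \<le> d1" "dl \<le> d2" unfolding dl_def using d1 d2 by auto
  obtain T where rT: "r ^ T < (1 - r) / 4" using real_arch_pow_inv[of "(1 - r) / 4" r] r by auto
  show ?thesis
  proof (intro exI[of _ dl] conjI allI impI dl(1) exI[of _ "4 * T + 1"])
    fix n E v u
    assume nN: "4 * T + 1 \<le> n"
    assume H: "regular_graph n d E \<and> spectral_bound (transition_matrix n d E) rho \<and> v < n \<and> u \<le> n \<and> u \<noteq> n"
    hence reg: "regular_graph n d E" and sb: "spectral_bound (transition_matrix n d E) rho"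
      and v: "v < n" and u: "u < n" by auto
    have n: "n > 0" using nN by auto
    have T: "4 * T \<le> n" using nN by auto
    define K where "K = nat \<lceil>dl * real n\<rceil> - 1"
    have "dl * real n \<le> real n" using dl n by (simp add: mult_le_cancel_right1)
    hence "\<lceil>dl * real n\<rceil> \<le> int n" by (simp add: ceiling_le_iff)
    hence K: "K \<le> n" unfolding K_def by linarith
    note res = walk_results[OF reg d n v sb r1 r(1) u K T less_imp_le[OF rT]]
    show "hit_time_ge_prob {..n} (add_pendant E v n) n (dl * real n) u \<ge> dl"
      unfolding hit_time_ge_prob_def K_def[symmetric] using res(1) dl(3) unfolding d1_def by linarith
    show "hit_time_le_prob {..n} (add_pendant E v n) n n u \<ge> dl"
      unfolding hit_time_le_prob_def using res(2) dl(4) unfolding d2_def by linarith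
  qed
qed


end
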